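(* For a sphere with four boundary components all labeled $2$ (so $\dim V=2$), the image of the pure mapping class group $P_{0,4}$ under the Fibonacci TQFT projective representation $\rho_{0,4}$ is dense in $PU(2)$.
   Context: The Fibonacci TQFT ($SO(3)$ Chern–Simons theory at $r=5$) assigns to each compact oriented surface $\Sigma$ with parametrized boundary components labeled by $\{0,2\}$ a finite-dimensional Hilbert space $V_\Sigma$ carrying a projective unitary action of the mapping class group of isotopy classes of orientation-, label- and parametrization-preserving homeomorphisms. $P_{g,n}$ denotes the pure mapping class group of a genus-$g$ surface with $n$ boundary components, and $\rho_{g,n}$ its projective representation on $V_\Sigma$ for $\Sigma$ of genus $g$ with $n$ boundary components labeled $2$ (components labeled $0$ may be capped off without changing the representation). In a suitable basis of the 2-dimensional space for $(g,n)=(0,4)$, a half-twist braid generator acts by $\mathrm{diag}(e^{4\pi i/5},-e^{2\pi i/5})$ and the fusion (change of basis) matrix is $\begin{pmatrix}\frac{\sqrt5-1}{2}&-\sqrt{\frac{\sqrt5-1}{2}}\\-\sqrt{\frac{\sqrt5-1}{2}}&\frac{\sqrt5-1}{2}\end{pmatrix}$. *)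

theory Defs
  imports "HOL-Analysis.Analysis"
begin

definition mat2 :: "complex \<Rightarrow> complex \<Rightarrow> complex \<Rightarrow> complex \<Rightarrow> complex^2^2" where
  "mat2 a b c d = (\<chi> i j. if i = 1 then (if j = 1 then a else b) else (if j = 1 then c else d))"

definition cadjoint :: "complex^2^2 \<Rightarrow> complex^2^2" where
  "cadjoint U = (\<chi> i j. cnj (U $ j $ i))"

definition unitary2 :: "(complex^2^2) set" where
  "unitary2 = {U. U ** cadjoint U = mat 1 \<and> cadjoint U ** U = mat 1}"

text \<open>Half-twist braid generator sigma_1 in the standard basis of V_{0,4}.\<close>
definition fib_sigma1 :: "complex^2^2" where
  "fib_sigma1 = mat2 (cis (4 * pi / 5)) 0 0 (- cis (2 * pi / 5))"

text \<open>Fusion (change of basis) matrix, with tau = (sqrt 5 - 1)/2.\<close>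
definition fib_tau :: real where "fib_tau = (sqrt 5 - 1) / 2"

definition fib_F :: "complex^2^2" where
  "fib_F = mat2 (of_real fib_tau) (- of_real (sqrt fib_tau))
               (- of_real (sqrt fib_tau)) (- of_real fib_tau)"

definition fib_sigma2 :: "complex^2^2" where
  "fib_sigma2 = fib_F ** fib_sigma1 ** matrix_inv fib_F"

text \<open>Images of the Dehn twists generating P_{0,4} (modulo the central boundary
  twists, which act by scalars): twists about the curves enclosing boundary
  components {1,2}, {2,3} and {1,3}.\<close>
definition rho04_generators :: "(complex^2^2) set" where
  "rho04_generators =
     { fib_sigma1 ** fib_sigma1,
       fib_sigma2 ** fib_sigma2,
       fib_sigma2 ** fib_sigma1 ** fib_sigma1 ** matrix_inv fib_sigma2 }"

inductive_set gen_group :: "(complex^2^2) set \<Rightarrow> (complex^2^2) set" for S where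
  gen_one: "mat 1 \<in> gen_group S"
| gen_mul: "g \<in> S \<Longrightarrow> h \<in> gen_group S \<Longrightarrow> g ** h \<in> gen_group S"
| gen_inv: "g \<in> S \<Longrightarrow> h \<in> gen_group S \<Longrightarrow> matrix_inv g ** h \<in> gen_group S"

text \<open>(Linear lift of) the image rho_{0,4}(P_{0,4}).\<close>
definition rho04_image :: "(complex^2^2) set" where
  "rho04_image = gen_group rho04_generators"

text \<open>Density in PU(2) = U(2)/U(1): the preimage of the image under the quotient
  map U(2) -> PU(2) (i.e. all unit-scalar multiples) is dense in U(2).\<close>
definition dense_in_PU2 :: "(complex^2^2) set \<Rightarrow> bool" where
  "dense_in_PU2 G \<longleftrightarrow> G \<subseteq> unitary2 \<and>
     unitary2 \<subseteq> closure {mat c ** g | c g. cmod c = 1 \<and> g \<in> G}"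

end

theory Submission
  imports Defs
begin

lemma two_ne: "(1::2) \<noteq> 2" "(2::2) \<noteq> 1" by simp_all

lemma mat2_nth [simp]:
  "mat2 a b c d $ 1 $ 1 = a" "mat2 a b c d $ 1 $ 2 = b"
  "mat2 a b c d $ 2 $ 1 = c" "mat2 a b c d $ 2 $ 2 = d"
  by (simp_all add: mat2_def)

lemma mat2_eta: "A = mat2 (A$1$1) (A$1$2) (A$2$1) (A$2$2)"
  by (simp add: vec_eq_iff forall_2)

lemma mat2_cases: obtains a b c d where "A = mat2 a b c d"
  using mat2_eta by blast

lemma mat2_eq_iff: "mat2 a b c d = mat2 a' b' c' d' \<longleftrightarrow> a = a' \<and> b = b' \<and> c = c' \<and> d = d'"
  apply (rule iffI)
   apply (drule arg_cong[where f="\<lambda>M. (M$1$1, M$1$2, M$2$1, M$2$2)"])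
  by simp_all

lemma mat2_mult [simp]: "mat2 a b c d ** mat2 e f g k = mat2 (a*e+b*g) (a*f+b*k) (c*e+d*g) (c*f+d*k)"
  unfolding vec_eq_iff forall_2 by (simp add: matrix_matrix_mult_def sum_2)

lemma mat_mat2: "mat x = mat2 x 0 0 x"
  by (subst mat2_eta) (simp add: mat_def)

lemma cadjoint_mat2 [simp]: "cadjoint (mat2 a b c d) = mat2 (cnj a) (cnj c) (cnj b) (cnj d)"
  by (subst mat2_eta) (simp add: cadjoint_def)

lemma det_mat2 [simp]: "det (mat2 a b c d) = a * d - b * c"
  by (simp add: det_2)

lemma cadjoint_mult: "cadjoint (A ** B) = cadjoint B ** cadjoint A"
proof -
  obtain a b c d where A: "A = mat2 a b c d" by (rule mat2_cases)
  obtain e f g k where B: "B = mat2 e f g k" by (rule mat2_cases)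
  show ?thesis unfolding A B by (simp add: mat2_eq_iff algebra_simps)
qed

lemma cadjoint_cadjoint [simp]: "cadjoint (cadjoint A) = A"
proof -
  obtain a b c d where A: "A = mat2 a b c d" by (rule mat2_cases)
  show ?thesis unfolding A by simp
qed

lemma matrix_inv_eq:
  fixes A B :: "complex^2^2"
  assumes "A ** B = mat 1" "B ** A = mat 1"
  shows "matrix_inv A = B"
proof -
  have "\<exists>A'. A ** A' = mat 1 \<and> A' ** A = mat 1" using assms by blast
  then have *: "A ** matrix_inv A = mat 1 \<and> matrix_inv A ** A = mat 1"
    unfolding matrix_inv_def by (rule someI_ex)
  have "matrix_inv A = matrix_inv A ** (A ** B)" using assms by simp
  also have "\<dots> = (matrix_inv A ** A) ** B" by (simp add: matrix_mul_assoc)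
  also have "\<dots> = B" using * by simp
  finally show ?thesis .
qed

lemma unitary2_iff: "U \<in> unitary2 \<longleftrightarrow> U ** cadjoint U = mat 1 \<and> cadjoint U ** U = mat 1"
  by (simp add: unitary2_def)

lemma unitary2_inv: "U \<in> unitary2 \<Longrightarrow> matrix_inv U = cadjoint U"
  by (rule matrix_inv_eq) (simp_all add: unitary2_iff)

lemma unitary2_cadjoint: "U \<in> unitary2 \<Longrightarrow> cadjoint U \<in> unitary2"
  by (simp add: unitary2_iff)

lemma unitary2_mult: "U \<in> unitary2 \<Longrightarrow> V \<in> unitary2 \<Longrightarrow> U ** V \<in> unitary2"
proof -
  assume u: "U \<in> unitary2" and v: "V \<in> unitary2"
  have "U ** V ** cadjoint (U ** V) = U ** (V ** cadjoint V) ** cadjoint U"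
    by (simp add: cadjoint_mult matrix_mul_assoc)
  also have "\<dots> = mat 1" using u v by (simp add: unitary2_iff)
  finally have 1: "U ** V ** cadjoint (U ** V) = mat 1" .
  have "cadjoint (U ** V) ** (U ** V) = cadjoint V ** (cadjoint U ** U) ** V"
    by (simp add: cadjoint_mult matrix_mul_assoc)
  also have "\<dots> = mat 1" using u v by (simp add: unitary2_iff)
  finally show ?thesis using 1 by (simp add: unitary2_iff)
qed

lemma unitary2_one: "mat 1 \<in> unitary2"
  by (simp add: unitary2_iff mat_mat2)

lemma gen_group_mult:
  assumes "g \<in> gen_group S" "h \<in> gen_group S"
  shows "g ** h \<in> gen_group S"
  using assms
proof (induction g rule: gen_group.induct)
  case gen_one then show ?case by simp
next
  case (gen_mul g h') then show ?case by (simp add: matrix_mul_assoc[symmetric] gen_group.gen_mul)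
next
  case (gen_inv g h') then show ?case by (simp add: matrix_mul_assoc[symmetric] gen_group.gen_inv)
qed

lemma gen_group_unitary:
  assumes "S \<subseteq> unitary2" "g \<in> gen_group S"
  shows "g \<in> unitary2"
  using assms(2)
proof (induction g rule: gen_group.induct)
  case gen_one then show ?case by (rule unitary2_one)
next
  case (gen_mul g h) then show ?case using assms(1) by (auto intro: unitary2_mult)
next
  case (gen_inv g h) then show ?case using assms(1)
    by (auto intro!: unitary2_mult simp: unitary2_inv unitary2_cadjoint)
qed


definition qm :: "real \<Rightarrow> real \<Rightarrow> real \<Rightarrow> real \<Rightarrow> complex^2^2" where
  "qm a b c d = mat2 (Complex a b) (Complex (-c) d) (Complex c d) (Complex a (-b))"

lemma qm_eq_iff: "qm a b c d = qm a' b' c' d' \<longleftrightarrow> a = a' \<and> b = b' \<and> c = c' \<and> d = d'"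
  by (auto simp: qm_def mat2_eq_iff)

lemma qm_mult: "qm a b c d ** qm a' b' c' d' =
  qm (a*a'-b*b'-c*c'-d*d') (a*b'+b*a'-c*d'+d*c') (a*c'+c*a'+b*d'-d*b') (a*d'+d*a'-b*c'+c*b')"
  by (simp add: qm_def mat2_eq_iff complex_eq_iff algebra_simps)

lemma qm_one: "qm 1 0 0 0 = mat 1"
  by (simp add: qm_def mat_mat2 mat2_eq_iff complex_eq_iff)

definition rot :: "real \<Rightarrow> real \<Rightarrow> real \<Rightarrow> real \<Rightarrow> complex^2^2" where
  "rot n1 n2 n3 t = qm (cos t) (sin t * n1) (sin t * n2) (sin t * n3)"

lemma rot_zero: "rot n1 n2 n3 0 = mat 1"
  by (simp add: rot_def qm_one)

lemma rot_add:
  assumes "n1^2 + n2^2 + n3^2 = 1"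
  shows "rot n1 n2 n3 t ** rot n1 n2 n3 u = rot n1 n2 n3 (t + u)"
proof -
  have e: "cos t * cos u - sin t * n1 * (sin u * n1) - sin t * n2 * (sin u * n2) - sin t * n3 * (sin u * n3)
      = cos t * cos u - sin t * sin u * (n1^2 + n2^2 + n3^2)"
    by (simp add: algebra_simps power2_eq_square)
  show ?thesis
    unfolding rot_def qm_mult qm_eq_iff cos_add sin_add e assms
    by (simp add: algebra_simps)
qed

lemma euler_core:
  assumes n: "n1^2 + n2^2 + n3^2 = 1" and m: "m1^2 + m2^2 + m3^2 = 1"
    and nm: "n1*m1 + n2*m2 + n3*m3 = 0"
  shows "rot n1 n2 n3 a ** rot m1 m2 m3 b ** rot n1 n2 n3 c =
    qm (cos b * cos (a+c))
       (cos b * sin (a+c) * n1 + sin b * cos (a-c) * m1 + sin b * sin (a-c) * (m2*n3 - m3*n2))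
       (cos b * sin (a+c) * n2 + sin b * cos (a-c) * m2 + sin b * sin (a-c) * (m3*n1 - m1*n3))
       (cos b * sin (a+c) * n3 + sin b * cos (a-c) * m3 + sin b * sin (a-c) * (m1*n2 - m2*n1))"
  unfolding rot_def qm_mult qm_eq_iff cos_add sin_add cos_diff sin_diff
  using n m nm
  apply (intro conjI)
     apply algebra
    apply algebra
   apply algebra
  apply algebra
  done

lemma sq3_zero:
  fixes w1 w2 w3 :: real
  assumes "w1^2 + w2^2 + w3^2 = 0"
  shows "w1 = 0 \<and> w2 = 0 \<and> w3 = 0"
proof -
  have "w1^2 \<ge> 0" "w2^2 \<ge> 0" "w3^2 \<ge> 0" by simp_all
  then have "w1^2 = 0" "w2^2 = 0" "w3^2 = 0" using assms by linarith+
  then show ?thesis by simp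
qed

lemma frame_complete:
  fixes n1 n2 n3 m1 m2 m3 v1 v2 v3 :: real
  assumes n: "n1^2 + n2^2 + n3^2 = 1" and m: "m1^2 + m2^2 + m3^2 = 1"
    and nm: "n1*m1 + n2*m2 + n3*m3 = 0"
  defines "l1 \<equiv> m2*n3 - m3*n2" and "l2 \<equiv> m3*n1 - m1*n3" and "l3 \<equiv> m1*n2 - m2*n1"
  defines "a \<equiv> v1*n1+v2*n2+v3*n3" and "b \<equiv> v1*m1+v2*m2+v3*m3" and "c \<equiv> v1*l1+v2*l2+v3*l3"
  shows "v1 = a*n1 + b*m1 + c*l1 \<and> v2 = a*n2 + b*m2 + c*l2 \<and> v3 = a*n3 + b*m3 + c*l3
     \<and> a^2 + b^2 + c^2 = v1^2+v2^2+v3^2"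
proof -
  define w1 where "w1 = v1 - (a*n1 + b*m1 + c*l1)"
  define w2 where "w2 = v2 - (a*n2 + b*m2 + c*l2)"
  define w3 where "w3 = v3 - (a*n3 + b*m3 + c*l3)"
  have ll: "l1^2 + l2^2 + l3^2 = 1" unfolding l1_def l2_def l3_def using n m nm by algebra
  have ln: "l1*n1 + l2*n2 + l3*n3 = 0" unfolding l1_def l2_def l3_def by algebra
  have lm: "l1*m1 + l2*m2 + l3*m3 = 0" unfolding l1_def l2_def l3_def by algebra
  have wn: "w1*n1 + w2*n2 + w3*n3 = 0"
    unfolding w1_def w2_def w3_def a_def using n nm ln by algebra
  have wm: "w1*m1 + w2*m2 + w3*m3 = 0"
    unfolding w1_def w2_def w3_def b_def using m nm lm by algebra
  have wl: "w1*l1 + w2*l2 + w3*l3 = 0"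
    unfolding w1_def w2_def w3_def c_def using ll ln lm by algebra
  have lag: "(w1^2+w2^2+w3^2)*(l1^2+l2^2+l3^2) - (w1*l1 + w2*l2 + w3*l3)^2
     = (m1*(w1*n1 + w2*n2 + w3*n3) - n1*(w1*m1 + w2*m2 + w3*m3))^2
     + (m2*(w1*n1 + w2*n2 + w3*n3) - n2*(w1*m1 + w2*m2 + w3*m3))^2
     + (m3*(w1*n1 + w2*n2 + w3*n3) - n3*(w1*m1 + w2*m2 + w3*m3))^2"
    unfolding l1_def l2_def l3_def by algebra
  have "w1^2+w2^2+w3^2 = 0" using lag unfolding ll wn wm wl by simp
  then have w: "w1 = 0" "w2 = 0" "w3 = 0" using sq3_zero by blast+
  then have v: "v1 = a*n1 + b*m1 + c*l1" "v2 = a*n2 + b*m2 + c*l2" "v3 = a*n3 + b*m3 + c*l3"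
    unfolding w1_def w2_def w3_def by simp_all
  have "v1^2+v2^2+v3^2 = v1*(a*n1 + b*m1 + c*l1) + v2*(a*n2 + b*m2 + c*l2) + v3*(a*n3 + b*m3 + c*l3)"
    using v by (simp add: power2_eq_square)
  also have "\<dots> = a*a + b*b + c*c" unfolding a_def b_def c_def by algebra
  finally show ?thesis using v by (simp add: power2_eq_square)
qed


lemma polar_exists:
  fixes x y :: real
  shows "\<exists>p. x = sqrt (x^2+y^2) * cos p \<and> y = sqrt (x^2+y^2) * sin p"
proof (cases "x = 0 \<and> y = 0")
  case True then show ?thesis by auto
next
  case False
  have pos: "x^2 + y^2 > 0" using False by (simp add: sum_power2_gt_zero_iff)
  define r where "r = sqrt (x^2+y^2)"
  have r: "r > 0" using pos unfolding r_def by simp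
  have rr: "r^2 = x^2 + y^2" unfolding r_def using pos by simp
  have "(x/r)^2 + (y/r)^2 = (x^2+y^2)/r^2" by (simp add: power_divide add_divide_distrib)
  also have "\<dots> = r^2/r^2" by (simp only: rr)
  also have "\<dots> = 1" using r by simp
  finally have xy: "(x/r)^2 + (y/r)^2 = 1" .
  obtain p where p: "x/r = cos p" "y/r = sin p" using sincos_total_2pi[OF xy] by blast
  have "x = r * cos p" "y = r * sin p" using r p by (simp_all add: divide_eq_eq)
  then show ?thesis unfolding r_def by blast
qed
lemma euler_exists:
  assumes n: "n1^2 + n2^2 + n3^2 = 1" and m: "m1^2 + m2^2 + m3^2 = 1"
    and nm: "n1*m1 + n2*m2 + n3*m3 = 0"
    and x: "x0^2 + x1^2 + x2^2 + x3^2 = 1"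
  shows "\<exists>a b c. rot n1 n2 n3 a ** rot m1 m2 m3 b ** rot n1 n2 n3 c =
    qm x0 (x1*n1 + x2*m1 + x3*(m2*n3 - m3*n2)) (x1*n2 + x2*m2 + x3*(m3*n1 - m1*n3))
          (x1*n3 + x2*m3 + x3*(m1*n2 - m2*n1))"
proof -
  define r1 where "r1 = sqrt (x0^2+x1^2)"
  define r2 where "r2 = sqrt (x2^2+x3^2)"
  have rr: "r1^2 + r2^2 = 1" unfolding r1_def r2_def using x by (simp add: algebra_simps)
  obtain b where b: "r1 = cos b" "r2 = sin b" using sincos_total_2pi[OF rr] by blast
  obtain p where p: "x0 = r1 * cos p" "x1 = r1 * sin p" using polar_exists r1_def by blast
  obtain q where q: "x2 = r2 * cos q" "x3 = r2 * sin q" using polar_exists r2_def by blast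
  define a where "a = (p + q) / 2"
  define c where "c = (p - q) / 2"
  have ac: "a + c = p" "a - c = q" unfolding a_def c_def by (simp_all add: field_simps)
  have xe: "x0 = cos b * cos p" "x1 = cos b * sin p" "x2 = sin b * cos q" "x3 = sin b * sin q"
    using p q b by simp_all
  have "rot n1 n2 n3 a ** rot m1 m2 m3 b ** rot n1 n2 n3 c =
    qm x0 (x1*n1 + x2*m1 + x3*(m2*n3 - m3*n2)) (x1*n2 + x2*m2 + x3*(m3*n1 - m1*n3))
          (x1*n3 + x2*m3 + x3*(m1*n2 - m2*n1))"
    unfolding euler_core[OF n m nm] by (simp only: ac xe)
  then show ?thesis by blast
qed

lemma conj_qm:
  fixes C S a b n1 n2 n3 m1 m2 m3 :: real
  shows "qm C (S*n1) (S*n2) (S*n3) ** qm a (b*m1) (b*m2) (b*m3) ** qm C (-S*n1) (-S*n2) (-S*n3) =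
    qm (a*(C^2+S^2*(n1^2+n2^2+n3^2)))
     (b*((C^2-S^2*(n1^2+n2^2+n3^2))*m1 + 2*S^2*(n1*m1+n2*m2+n3*m3)*n1 - 2*C*S*(n2*m3-n3*m2)))
     (b*((C^2-S^2*(n1^2+n2^2+n3^2))*m2 + 2*S^2*(n1*m1+n2*m2+n3*m3)*n2 - 2*C*S*(n3*m1-n1*m3)))
     (b*((C^2-S^2*(n1^2+n2^2+n3^2))*m3 + 2*S^2*(n1*m1+n2*m2+n3*m3)*n3 - 2*C*S*(n1*m2-n2*m1)))"
  unfolding qm_mult qm_eq_iff
  apply (intro conjI)
     apply algebra
    apply algebra
   apply algebra
  apply algebra
  done

lemma conj_rot:
  fixes n1 n2 n3 m1 m2 m3 th t :: real
  assumes n: "n1^2 + n2^2 + n3^2 = 1"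
  shows "rot n1 n2 n3 th ** rot m1 m2 m3 t ** rot n1 n2 n3 (-th) =
    rot ((cos th^2 - sin th^2)*m1 + 2 * sin th^2*(n1*m1+n2*m2+n3*m3)*n1 - 2*cos th * sin th*(n2*m3 - n3*m2))
        ((cos th^2 - sin th^2)*m2 + 2 * sin th^2*(n1*m1+n2*m2+n3*m3)*n2 - 2*cos th * sin th*(n3*m1 - n1*m3))
        ((cos th^2 - sin th^2)*m3 + 2 * sin th^2*(n1*m1+n2*m2+n3*m3)*n3 - 2*cos th * sin th*(n1*m2 - n2*m1)) t"
proof -
  have e: "rot n1 n2 n3 (-th) = qm (cos th) (- sin th * n1) (- sin th * n2) (- sin th * n3)"
    by (simp add: rot_def)
  show ?thesis
    unfolding e unfolding rot_def conj_qm n by simp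
qed


lemma frame_coords:
  fixes n1 n2 n3 m1 m2 m3 v1 v2 v3 :: real
  assumes n: "n1^2 + n2^2 + n3^2 = 1" and m: "m1^2 + m2^2 + m3^2 = 1"
    and nm: "n1*m1 + n2*m2 + n3*m3 = 0"
  shows "\<exists>a b c. v1 = a*n1 + b*m1 + c*(m2*n3 - m3*n2) \<and> v2 = a*n2 + b*m2 + c*(m3*n1 - m1*n3)
     \<and> v3 = a*n3 + b*m3 + c*(m1*n2 - m2*n1) \<and> a^2 + b^2 + c^2 = v1^2+v2^2+v3^2"
  using frame_complete[OF n m nm, of v1 v2 v3] by blast

lemma stage2:
  fixes K :: "(complex^2^2) set"
  assumes mult: "\<And>x y. x \<in> K \<Longrightarrow> y \<in> K \<Longrightarrow> x ** y \<in> K"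
    and n: "n1^2+n2^2+n3^2 = 1" and m: "m1^2+m2^2+m3^2 = 1"
    and dd: "(n1*m1+n2*m2+n3*m3)^2 \<le> 1/2"
    and Tn: "\<And>t. rot n1 n2 n3 t \<in> K" and Tm: "\<And>t. rot m1 m2 m3 t \<in> K"
    and x: "x0^2+x1^2+x2^2+x3^2 = 1"
  shows "qm x0 x1 x2 x3 \<in> K"
proof -
  define d where "d = n1*m1+n2*m2+n3*m3"
  have d2: "d^2 \<le> 1/2" using dd d_def by simp
  have d3: "1 - d^2 > 0" using d2 by simp
  define k where "k = -(d^2/(1 - d^2))"
  have "d^2/(1-d^2) \<le> 1" using d2 d3 by (simp add: divide_le_eq)
  moreover have "d^2/(1-d^2) \<ge> 0" using d3 by simp
  ultimately have k1: "-1 \<le> k" "k \<le> 0" unfolding k_def by simp_all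
  define C where "C = sqrt ((1+k)/2)"
  define S where "S = sqrt ((1-k)/2)"
  have C2: "C^2 = (1+k)/2" unfolding C_def using k1 by simp
  have S2: "S^2 = (1-k)/2" unfolding S_def using k1 by simp
  have CS: "C^2 + S^2 = 1" using C2 S2 by simp
  obtain th where th: "C = cos th" "S = sin th" using sincos_total_2pi[OF CS] by blast
  define p1 where "p1 = (C^2 - S^2)*m1 + 2 * S^2*d*n1 - 2*C * S*(n2*m3 - n3*m2)"
  define p2 where "p2 = (C^2 - S^2)*m2 + 2 * S^2*d*n2 - 2*C * S*(n3*m1 - n1*m3)"
  define p3 where "p3 = (C^2 - S^2)*m3 + 2 * S^2*d*n3 - 2*C * S*(n1*m2 - n2*m1)"
  have conj: "rot n1 n2 n3 th ** rot m1 m2 m3 t ** rot n1 n2 n3 (-th) = rot p1 p2 p3 t" for t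
    using conj_rot[OF n, of th m1 m2 m3 t] unfolding p1_def p2_def p3_def d_def th by simp
  have Tp: "rot p1 p2 p3 t \<in> K" for t
    using mult[OF mult[OF Tn Tm] Tn] conj by metis
  have p: "p1^2+p2^2+p3^2 = 1"
    unfolding p1_def p2_def p3_def d_def using n m CS by algebra
  have "m1*p1 + m2*p2 + m3*p3 = (C^2 - S^2) + 2 * S^2 * d^2"
    unfolding p1_def p2_def p3_def d_def using m by algebra
  also have "\<dots> = k + (1-k) * d^2" unfolding C2 S2 by (simp add: field_simps)
  also have "\<dots> = 0" unfolding k_def using d3 by (simp add: field_simps)
  finally have mp: "m1*p1 + m2*p2 + m3*p3 = 0" .
  obtain a b c where v: "x1 = a*m1 + b*p1 + c*(p2*m3 - p3*m2)" "x2 = a*m2 + b*p2 + c*(p3*m1 - p1*m3)"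
     "x3 = a*m3 + b*p3 + c*(p1*m2 - p2*m1)" and abc: "a^2 + b^2 + c^2 = x1^2+x2^2+x3^2"
    using frame_coords[OF m p mp, of x1 x2 x3] by blast
  have "x0^2 + a^2 + b^2 + c^2 = 1" using abc x by simp
  then obtain al be ga where e: "rot m1 m2 m3 al ** rot p1 p2 p3 be ** rot m1 m2 m3 ga =
    qm x0 (a*m1 + b*p1 + c*(p2*m3 - p3*m2)) (a*m2 + b*p2 + c*(p3*m1 - p1*m3))
          (a*m3 + b*p3 + c*(p1*m2 - p2*m1))"
    using euler_exists[OF m p mp] by blast
  have "rot m1 m2 m3 al ** rot p1 p2 p3 be ** rot m1 m2 m3 ga \<in> K"
    by (intro mult Tm Tp)
  then show ?thesis using e v by simp
qed

lemma mat_mult_mat: "(mat a :: complex^2^2) ** mat b = mat (a * b)"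
  by (simp add: mat_mat2)

lemma mat_comm:
  fixes X :: "complex^2^2"
  shows "mat a ** X = X ** mat a"
proof -
  obtain p q r s where X: "X = mat2 p q r s" by (rule mat2_cases)
  show ?thesis unfolding X by (simp add: mat_mat2 mat2_eq_iff algebra_simps)
qed

lemma cadjoint_mat: "cadjoint (mat a) = mat (cnj a :: complex)"
  by (simp add: mat_mat2)

lemma su2_qm:
  assumes U: "U \<in> unitary2" and dU: "det U = 1"
  shows "\<exists>x0 x1 x2 x3. U = qm x0 x1 x2 x3 \<and> x0^2+x1^2+x2^2+x3^2 = 1"
proof -
  obtain p q r s where X: "U = mat2 p q r s" by (rule mat2_cases)
  define V where "V = mat2 s (-q) (-r) p"
  have "U ** V = mat 1" using dU unfolding X V_def by (simp add: mat_mat2 algebra_simps)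
  then have "cadjoint U = V"
    using U unfolding unitary2_iff by (metis matrix_mul_assoc matrix_mul_rid matrix_mul_lid)
  then have e: "cnj p = s" "cnj r = -q" unfolding X V_def by (simp_all add: mat2_eq_iff)
  have "(cadjoint U ** U) $ 1 $ 1 = 1" using U unfolding unitary2_iff by (simp add: mat_mat2)
  then have "cnj p * p + cnj r * r = 1" unfolding X by simp
  then have "Re (cnj p * p + cnj r * r) = 1" by simp
  then have n: "(Re p)^2 + (Im p)^2 + (Re r)^2 + (Im r)^2 = 1" by (simp add: power2_eq_square)
  have "U = qm (Re p) (Im p) (Re r) (Im r)"
    unfolding X qm_def mat2_eq_iff using e
    by (simp add: complex_eq_iff)
  then show ?thesis using n by blast
qed


lemma det_cadjoint: "det (cadjoint U) = cnj (det U)"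
proof -
  obtain p q r s where X: "U = mat2 p q r s" by (rule mat2_cases)
  show ?thesis unfolding X by simp
qed

lemma det_mat: "det (mat a :: complex^2^2) = a^2"
  by (simp add: mat_mat2 power2_eq_square)

lemma unit_cnj: "cmod a = 1 \<Longrightarrow> a * cnj a = 1"
  by (metis complex_norm_square mult.right_neutral of_real_1 power_one)

lemma unitary_in_K:
  fixes K :: "(complex^2^2) set"
  assumes mult: "\<And>x y. x \<in> K \<Longrightarrow> y \<in> K \<Longrightarrow> x ** y \<in> K"
    and scal: "\<And>c. cmod c = 1 \<Longrightarrow> mat c \<in> K"
    and su: "\<And>x0 x1 x2 x3. x0^2+x1^2+x2^2+x3^2 = 1 \<Longrightarrow> qm x0 x1 x2 x3 \<in> K"
  shows "unitary2 \<subseteq> K"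
proof
  fix U assume U: "U \<in> unitary2"
  define dl where "dl = det U"
  have "dl * cnj dl = det (U ** cadjoint U)" unfolding dl_def by (simp add: det_mul det_cadjoint)
  also have "\<dots> = 1" using U unfolding unitary2_iff by (simp add: mat_mat2)
  finally have "dl * cnj dl = 1" .
  then have "complex_of_real ((cmod dl)^2) = 1" by (simp only: complex_norm_square)
  then have "(cmod dl)^2 = 1" using of_real_eq_1_iff by blast
  then have ndl: "cmod dl = 1" using norm_ge_zero[of dl] by (auto simp add: power2_eq_1_iff)
  define c where "c = csqrt dl"
  have c2: "c^2 = dl" unfolding c_def by simp
  have "(cmod c)^2 = 1" using ndl c2 by (metis norm_power)
  then have nc: "cmod c = 1" using norm_ge_zero[of c] by (auto simp add: power2_eq_1_iff)
  define i where "i = inverse c"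
  have ni: "cmod i = 1" unfolding i_def using nc by (simp add: norm_inverse)
  have ci: "c * i = 1" unfolding i_def using nc by (subst right_inverse) auto
  define V where "V = mat i ** U"
  have "V ** cadjoint V = mat i ** (U ** cadjoint U) ** mat (cnj i)"
    unfolding V_def cadjoint_mult cadjoint_mat by (simp add: matrix_mul_assoc mat_comm)
  also have "\<dots> = mat 1" using U unit_cnj[OF ni] unfolding unitary2_iff by (simp add: mat_mult_mat)
  finally have V1: "V ** cadjoint V = mat 1" .
  have "cadjoint V ** V = cadjoint U ** (mat (cnj i) ** mat i) ** U"
    unfolding V_def cadjoint_mult cadjoint_mat by (simp add: matrix_mul_assoc)
  also have "\<dots> = mat 1" using U unit_cnj[OF ni] unfolding unitary2_iff by (simp add: mat_mult_mat mult.commute)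
  finally have V2: "cadjoint V ** V = mat 1" .
  have Vu: "V \<in> unitary2" using V1 V2 unitary2_iff by blast
  have "det V = i^2 * dl" unfolding V_def dl_def by (simp add: det_mul det_mat)
  also have "\<dots> = (c * i)^2" using c2 by (simp add: power_mult_distrib)
  also have "\<dots> = 1" using ci by simp
  finally have dV: "det V = 1" .
  obtain x0 x1 x2 x3 where "V = qm x0 x1 x2 x3" "x0^2+x1^2+x2^2+x3^2 = 1"
    using su2_qm[OF Vu dV] by blast
  then have "V \<in> K" using su by simp
  moreover have "U = mat c ** V" unfolding V_def using ci by (simp add: matrix_mul_assoc mat_mult_mat)
  ultimately show "U \<in> K" using mult scal[OF nc] by simp
qed


lemma tendsto_mmult:
  fixes f g :: "'a \<Rightarrow> complex^2^2"
  assumes "(f \<longlongrightarrow> a) F" "(g \<longlongrightarrow> b) F"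
  shows "((\<lambda>x. f x ** g x) \<longlongrightarrow> a ** b) F"
  unfolding matrix_matrix_mult_def
  by (intro tendsto_vec_lambda tendsto_sum tendsto_mult tendsto_vec_nth assms)

lemma closure_mult:
  fixes A :: "(complex^2^2) set"
  assumes mult: "\<And>x y. x \<in> A \<Longrightarrow> y \<in> A \<Longrightarrow> x ** y \<in> A"
    and x: "x \<in> closure A" and y: "y \<in> closure A"
  shows "x ** y \<in> closure A"
proof -
  have "\<exists>xs. (\<forall>n. xs n \<in> A) \<and> xs \<longlonglongrightarrow> x" using x by (simp only: closure_sequential)
  then obtain xs where xs: "\<And>n. xs n \<in> A" "xs \<longlonglongrightarrow> x" by blast
  have "\<exists>ys. (\<forall>n. ys n \<in> A) \<and> ys \<longlonglongrightarrow> y" using y by (simp only: closure_sequential)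
  then obtain ys where ys: "\<And>n. ys n \<in> A" "ys \<longlonglongrightarrow> y" by blast
  have "(\<lambda>n. xs n ** ys n) \<longlonglongrightarrow> x ** y" by (rule tendsto_mmult[OF xs(2) ys(2)])
  moreover have "\<And>n. xs n ** ys n \<in> A" using xs ys mult by blast
  ultimately have "\<exists>zs. (\<forall>n. zs n \<in> A) \<and> zs \<longlonglongrightarrow> x ** y"
    by (intro exI[of _ "\<lambda>n. xs n ** ys n"]) auto
  then show ?thesis by (simp only: closure_sequential)
qed

lemma tendsto_mat2:
  fixes a b c d :: "'a \<Rightarrow> complex"
  assumes "(a \<longlongrightarrow> a0) F" "(b \<longlongrightarrow> b0) F" "(c \<longlongrightarrow> c0) F" "(d \<longlongrightarrow> d0) F"
  shows "((\<lambda>x. mat2 (a x) (b x) (c x) (d x)) \<longlongrightarrow> mat2 a0 b0 c0 d0) F"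
  unfolding mat2_def
proof (intro tendsto_vec_lambda)
  fix i j :: 2
  show "((\<lambda>x. if i = 1 then if j = 1 then a x else b x else if j = 1 then c x else d x) \<longlongrightarrow>
      (if i = 1 then if j = 1 then a0 else b0 else if j = 1 then c0 else d0)) F"
    using assms by (cases "i = 1"; cases "j = 1"; simp)
qed

lemma tendsto_rot:
  fixes f :: "'a::t2_space \<Rightarrow> real"
  assumes "(f \<longlongrightarrow> l) F"
  shows "((\<lambda>x. rot n1 n2 n3 (f x)) \<longlongrightarrow> rot n1 n2 n3 l) F"
  unfolding rot_def qm_def
  by (intro tendsto_mat2 tendsto_Complex tendsto_mult tendsto_const tendsto_minus
      tendsto_cos[OF assms] tendsto_sin[OF assms])

lemma continuous_on_rot: "continuous_on S (rot n1 n2 n3)"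
  unfolding continuous_on_def
  by (intro ballI tendsto_rot tendsto_ident_at)

lemma rot_periodic: "rot n1 n2 n3 (x + 2 * pi * of_int j) = rot n1 n2 n3 x"
proof -
  have "cos (x + 2 * pi * of_int j) = cos x" "sin (x + 2 * pi * of_int j) = sin x"
    by (simp_all add: cos_add sin_add)
  then show ?thesis by (simp add: rot_def)
qed

lemma torus_in_closed:
  fixes K :: "(complex^2^2) set"
  assumes K: "closed K" and pw: "\<And>k::nat. rot n1 n2 n3 (real k * a) \<in> K"
    and irr: "a / (2 * pi) \<notin> \<rat>"
  shows "rot n1 n2 n3 t \<in> K"
proof -
  define A where "A = {real k * a + 2 * pi * of_int j | k j. True}"
  have "t \<in> closure A" unfolding closure_approachable
  proof (intro allI impI)
    fix e :: real assume e: "e > 0"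
    then have e': "e / (2*pi) > 0" by simp
    obtain h k where hk: "k > 0" "\<bar>of_int k * (a / (2*pi)) - of_int h - t / (2*pi)\<bar> < e / (2*pi)"
      using sequence_of_fractional_parts_is_dense[OF irr e'] by metis
    define y where "y = real (nat k) * a + 2 * pi * of_int (-h)"
    have yA: "y \<in> A" unfolding A_def y_def by blast
    have "y - t = 2 * pi * (of_int k * (a / (2*pi)) - of_int h - t / (2*pi))"
      unfolding y_def using hk(1) by (simp add: field_simps)
    then have "\<bar>y - t\<bar> = 2 * pi * \<bar>of_int k * (a / (2*pi)) - of_int h - t / (2*pi)\<bar>"
      by (simp add: abs_mult)
    also have "\<dots> < 2 * pi * (e / (2*pi))" by (rule mult_strict_left_mono[OF hk(2)]) simp
    also have "\<dots> = e" by simp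
    finally show "\<exists>y\<in>A. dist y t < e" using yA by (auto simp: dist_real_def)
  qed
  moreover have "rot n1 n2 n3 ` closure A \<subseteq> K"
  proof (rule image_closure_subset[OF continuous_on_rot K])
    show "rot n1 n2 n3 ` A \<subseteq> K" unfolding A_def using pw rot_periodic by auto
  qed
  ultimately show ?thesis by blast
qed


lemma sqrt5_bounds: "2.2 < sqrt (5::real)" "sqrt (5::real) < 2.3"
proof -
  have "sqrt ((2.2::real)^2) < sqrt 5" by (subst real_sqrt_less_iff) (simp add: power2_eq_square)
  then show "2.2 < sqrt (5::real)" by simp
  have "sqrt 5 < sqrt ((2.3::real)^2)" by (subst real_sqrt_less_iff) (simp add: power2_eq_square)
  then show "sqrt (5::real) < 2.3" by simp
qed

lemma sqrt5_sq: "(sqrt 5::real)^2 = 5" by simp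

lemma cos_pi5: "cos (pi/5) = (1 + sqrt 5) / 4"
proof -
  define a where "a = cos (pi/5)"
  define r where "r = sqrt (5::real)"
  have r2: "r^2 = 5" unfolding r_def by simp
  have r1: "r > 1" unfolding r_def using sqrt5_bounds by simp
  have c2: "cos (2*(pi/5)) = 2*a^2 - 1" unfolding a_def by (rule cos_double_cos)
  have c3: "cos (3*(pi/5)) = 4*a^3 - 3*a" unfolding a_def by (rule cos_treble_cos)
  have e3: "3*(pi/5) = pi - 2*(pi/5)" by simp
  have "cos (3*(pi/5)) = cos (pi - 2*(pi/5))" by (simp only: e3)
  also have "\<dots> = - cos (2*(pi/5))" by (rule cos_pi_minus)
  finally have "cos (3*(pi/5)) = - cos (2*(pi/5))" .
  then have "4*a^3 - 3*a = -(2*a^2 - 1)" using c2 c3 by simp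
  then have e: "(a + 1) * (4*a^2 - 2*a - 1) = 0" by (simp add: algebra_simps power2_eq_square power3_eq_cube)
  have apos: "a > 0" unfolding a_def by (rule cos_gt_zero) simp_all
  then have "4*a^2 - 2*a - 1 = 0" using e by simp
  moreover have "(4*a - 1 - r) * (4*a - 1 + r) = 4*(4*a^2 - 2*a - 1) + (5 - r^2)"
    by (simp add: algebra_simps power2_eq_square)
  ultimately have "(4*a - 1 - r) * (4*a - 1 + r) = 0" using r2 by simp
  moreover have "4*a - 1 + r > 0" using apos r1 by simp
  ultimately have "4*a - 1 - r = 0" by simp
  then have "a = (1+r)/4" by simp
  then show ?thesis unfolding a_def r_def .
qed

lemma cos_4pi5: "cos (4*pi/5) = - ((1 + sqrt 5) / 4)"
proof -
  have e4: "4*pi/5 = pi - pi/5" by simp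
  have "cos (4*pi/5) = cos (pi - pi/5)" by (simp only: e4)
  also have "\<dots> = - cos (pi/5)" by (rule cos_pi_minus)
  finally show ?thesis unfolding cos_pi5 .
qed

lemma tau_pos: "fib_tau > 0"
  unfolding fib_tau_def using sqrt5_bounds by simp

lemma tau_eq: "fib_tau^2 + fib_tau = 1"
  unfolding fib_tau_def power2_eq_square by (simp add: field_simps)

lemma sqrt_tau: "sqrt fib_tau * sqrt fib_tau = fib_tau"
  using tau_pos by simp

lemma F_sq: "fib_F ** fib_F = mat 1"
  using tau_eq sqrt_tau
  by (simp add: fib_F_def mat_mat2 mat2_eq_iff complex_eq_iff power2_eq_square algebra_simps)

lemma F_inv: "matrix_inv fib_F = fib_F"
  by (rule matrix_inv_eq[OF F_sq F_sq])

lemma F_cadj: "cadjoint fib_F = fib_F"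
  by (simp add: fib_F_def)

lemma F_unitary: "fib_F \<in> unitary2"
  unfolding unitary2_iff F_cadj F_sq by simp

lemma sigma1_unitary: "fib_sigma1 \<in> unitary2"
  by (simp add: unitary2_iff fib_sigma1_def mat_mat2 cis_cnj cis_mult)

lemma sigma2_eq: "fib_sigma2 = fib_F ** fib_sigma1 ** fib_F"
  by (simp add: fib_sigma2_def F_inv)

lemma sigma2_unitary: "fib_sigma2 \<in> unitary2"
  unfolding sigma2_eq by (intro unitary2_mult F_unitary sigma1_unitary)

lemma gens_unitary: "rho04_generators \<subseteq> unitary2"
  unfolding rho04_generators_def
  by (auto intro!: unitary2_mult sigma1_unitary sigma2_unitary
      simp: unitary2_inv[OF sigma2_unitary] unitary2_cadjoint[OF sigma2_unitary])

lemma image_unitary: "rho04_image \<subseteq> unitary2"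
  unfolding rho04_image_def using gen_group_unitary[OF gens_unitary] by blast


lemma pi5_arith: "4*pi/5 + 4*pi/5 = 8*pi/(5::real)" "2*pi/5 + 2*pi/5 = 4*pi/(5::real)"
  "8*pi/5 + -(8*pi/5) = (0::real)" "4*pi/5 + -(4*pi/5) = (0::real)"
  "8*pi/5 + -(4*pi/5) = 4*pi/(5::real)" "4*pi/5 + -(8*pi/5) = -(4*pi/(5::real))"
  by simp_all

definition "Pc = cis (8*pi/5)"
definition "Qc = cis (4*pi/5)"
definition "Dp = mat2 (cnj Pc) 0 0 (cnj Qc)"
definition "g1 = mat2 Pc 0 0 Qc"

lemma g1_eq: "fib_sigma1 ** fib_sigma1 = g1"
  by (simp add: fib_sigma1_def g1_def Pc_def Qc_def mat2_eq_iff cis_mult pi5_arith)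

lemma PQ_unit: "Pc * cnj Pc = 1" "cnj Pc * Pc = 1" "Qc * cnj Qc = 1" "cnj Qc * Qc = 1"
  by (simp_all add: Pc_def Qc_def cis_cnj cis_mult pi5_arith)

lemma PcQc: "Pc * cnj Qc = cis (4*pi/5)" "Qc * cnj Pc = cis (-(4*pi/5))"
  by (simp_all add: Pc_def Qc_def cis_cnj cis_mult pi5_arith)

lemma g1_Dp: "g1 ** Dp = mat 1" "Dp ** g1 = mat 1"
  by (simp_all add: g1_def Dp_def mat_mat2 PQ_unit)

lemma g1_Dp': "g1 ** (Dp ** X) = X" "Dp ** (g1 ** X) = X"
  by (simp_all add: matrix_mul_assoc g1_Dp)

lemma F_sq': "fib_F ** (fib_F ** X) = X"
  by (simp add: matrix_mul_assoc F_sq)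

lemma s2s2: "fib_sigma2 ** fib_sigma2 = fib_F ** (g1 ** fib_F)"
  unfolding sigma2_eq g1_eq[symmetric] by (simp add: matrix_mul_assoc[symmetric] F_sq')

lemma s2s2_inv: "matrix_inv (fib_sigma2 ** fib_sigma2) = fib_F ** (Dp ** fib_F)"
  unfolding s2s2
  by (rule matrix_inv_eq) (simp_all add: matrix_mul_assoc[symmetric] F_sq' g1_Dp' F_sq)

definition "hh = g1 ** (fib_F ** (Dp ** fib_F))"

lemma hh_in: "hh \<in> rho04_image"
proof -
  have a: "fib_sigma1 ** fib_sigma1 \<in> rho04_generators" "fib_sigma2 ** fib_sigma2 \<in> rho04_generators"
    by (simp_all add: rho04_generators_def)
  have "matrix_inv (fib_sigma2 ** fib_sigma2) ** mat 1 \<in> gen_group rho04_generators"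
    by (rule gen_inv[OF a(2) gen_one])
  then have "fib_sigma1 ** fib_sigma1 ** (matrix_inv (fib_sigma2 ** fib_sigma2) ** mat 1) \<in> gen_group rho04_generators"
    by (rule gen_mul[OF a(1)])
  then show ?thesis unfolding rho04_image_def hh_def g1_eq s2s2_inv by simp
qed

lemma hh_generic: "(mat2 P 0 0 Q ** (mat2 t (-r) (-r) (-t) ** (mat2 P' 0 0 Q' ** mat2 t (-r) (-r) (-t)))) $ 1 $ 1
   = t*t*(P*P') + r*r*(P*Q')"
  by (simp add: algebra_simps)

lemma det_generic: "det (mat2 P 0 0 Q ** (M ** (mat2 P' 0 0 Q' ** M))) = (P*P')*(Q*Q')*(det M * det M)"
  by (simp add: det_mul algebra_simps)

lemma hh11: "hh $ 1 $ 1 = complex_of_real (fib_tau^2) + complex_of_real fib_tau * cis (4*pi/5)"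
proof -
  have "hh $ 1 $ 1 = complex_of_real fib_tau * complex_of_real fib_tau * (Pc * cnj Pc)
     + complex_of_real (sqrt fib_tau) * complex_of_real (sqrt fib_tau) * (Pc * cnj Qc)"
    unfolding hh_def g1_def Dp_def fib_F_def by (rule hh_generic)
  also have "\<dots> = complex_of_real (fib_tau^2) + complex_of_real fib_tau * cis (4*pi/5)"
    unfolding PQ_unit PcQc of_real_mult[symmetric] sqrt_tau by (simp add: power2_eq_square)
  finally show ?thesis .
qed

lemma det_F: "det fib_F = -1"
proof -
  have st: "complex_of_real (sqrt fib_tau) * complex_of_real (sqrt fib_tau) = complex_of_real fib_tau"
    by (simp only: of_real_mult[symmetric] sqrt_tau)
  have "det fib_F = - complex_of_real (fib_tau^2 + sqrt fib_tau * sqrt fib_tau)"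
    using tau_pos by (simp add: fib_F_def power2_eq_square st)
  also have "\<dots> = -1" using tau_eq sqrt_tau by simp
  finally show ?thesis .
qed

lemma hh_det: "det hh = 1"
  unfolding hh_def g1_def Dp_def det_generic det_F PQ_unit by simp

lemma hh_unitary: "hh \<in> unitary2"
  using hh_in image_unitary by blast


lemma five_dvd_sq: "(5::int) dvd c^2 \<Longrightarrow> 5 dvd c"
proof -
  assume a: "(5::int) dvd c^2"
  define r where "r = c mod 5"
  have r: "0 \<le> r" "r < 5" unfolding r_def by simp_all
  have "r^2 mod 5 = c^2 mod 5" unfolding r_def by (rule power_mod)
  then have "r^2 mod 5 = 0" using a by simp
  moreover have "r = 0 \<or> r = 1 \<or> r = 2 \<or> r = 3 \<or> r = 4" using r by auto
  ultimately have "r = 0" by (auto simp: power2_eq_square)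
  then show ?thesis unfolding r_def by auto
qed

lemma sq5: "(c::int)^2 = 5 * b^2 \<Longrightarrow> b = 0"
proof (induction "nat \<bar>b\<bar>" arbitrary: b c rule: less_induct)
  case less
  show ?case
  proof (rule ccontr)
    assume b0: "b \<noteq> 0"
    have "5 dvd c^2" using less.prems by simp
    then have "5 dvd c" by (rule five_dvd_sq)
    then obtain e where ce: "c = 5 * e" by blast
    have be: "b^2 = 5 * e^2" using less.prems unfolding ce by (simp add: power_mult_distrib)
    have e0: "e \<noteq> 0" using be b0 by auto
    have "e^2 > 0" using e0 by simp
    then have "e^2 < b^2" using be by simp
    then have "\<bar>e\<bar>^2 < \<bar>b\<bar>^2" by simp
    then have "\<bar>e\<bar> < \<bar>b\<bar>" by (rule power_less_imp_less_base) simp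
    then have "nat \<bar>e\<bar> < nat \<bar>b\<bar>" by simp
    then have "e = 0" using less.hyps be by blast
    then show False using e0 by simp
  qed
qed

lemma sqrt5_indep:
  fixes A B :: int
  assumes "real_of_int A + real_of_int B * sqrt 5 = 2"
  shows "B = 0 \<and> A = 2"
proof -
  have "real_of_int B * sqrt 5 = real_of_int (2 - A)" using assms by simp
  then have "(real_of_int B * sqrt 5)^2 = (real_of_int (2 - A))^2" by simp
  then have "real_of_int (5 * B^2) = real_of_int ((2 - A)^2)" by (simp add: power_mult_distrib)
  then have "(2 - A)^2 = 5 * B^2" by (simp only: of_int_eq_iff)
  then have "B = 0" by (rule sq5)
  then show ?thesis using assms by simp
qed

fun AB :: "nat \<Rightarrow> int \<times> int" where
  "AB 0 = (2, 0)"
| "AB (Suc 0) = (2, -1)"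
| "AB (Suc (Suc k)) = (2 * fst (AB (Suc k)) - 5 * snd (AB (Suc k)) - fst (AB k),
                       2 * snd (AB (Suc k)) - fst (AB (Suc k)) - snd (AB k))"

lemma cos_rec: "cos (real (Suc (Suc k)) * a) = 2 * cos a * cos (real (Suc k) * a) - cos (real k * a)"
proof -
  have e1: "real (Suc (Suc k)) * a = real (Suc k) * a + a" by (simp add: algebra_simps)
  have e2: "real k * a = real (Suc k) * a - a" by (simp add: algebra_simps)
  show ?thesis unfolding e1 e2 cos_add cos_diff by simp
qed

lemma AB_cos:
  assumes c: "2 * cos a = 2 - sqrt 5"
  shows "2 * cos (real k * a) = real_of_int (fst (AB k)) + real_of_int (snd (AB k)) * sqrt 5"
proof (induction k rule: AB.induct)
  case 1 then show ?case by simp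
next
  case 2 then show ?case using c by simp
next
  case (3 k)
  have "2 * cos (real (Suc (Suc k)) * a) = (2 * cos a) * (2 * cos (real (Suc k) * a)) - 2 * cos (real k * a)"
    unfolding cos_rec by (simp add: algebra_simps)
  also have "\<dots> = (2 - sqrt 5) * (real_of_int (fst (AB (Suc k))) + real_of_int (snd (AB (Suc k))) * sqrt 5)
     - (real_of_int (fst (AB k)) + real_of_int (snd (AB k)) * sqrt 5)"
    using 3 c by simp
  also have "\<dots> = real_of_int (fst (AB (Suc (Suc k)))) + real_of_int (snd (AB (Suc (Suc k)))) * sqrt 5"
    by (simp add: algebra_simps)
  finally show ?case .
qed

definition sAB :: "nat \<Rightarrow> real" where
  "sAB k = real_of_int (fst (AB k)) - real_of_int (snd (AB k)) * sqrt 5"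

lemma sAB_rec: "sAB (Suc (Suc k)) = (2 + sqrt 5) * sAB (Suc k) - sAB k"
  unfolding sAB_def by (simp add: algebra_simps)

lemma sAB_mono: "0 < sAB k \<and> sAB k < sAB (Suc k)"
proof (induction k)
  case 0
  have "sqrt (5::real) > 0" by simp
  then show ?case by (simp add: sAB_def)
next
  case (Suc k)
  have p: "sAB (Suc k) > 0" using Suc by simp
  have "sqrt 5 * sAB (Suc k) > 0" using p by simp
  moreover have "sAB (Suc (Suc k)) - sAB (Suc k) = sAB (Suc k) - sAB k + sqrt 5 * sAB (Suc k)"
    unfolding sAB_rec by (simp add: algebra_simps)
  ultimately have "sAB (Suc (Suc k)) > sAB (Suc k)" using Suc by linarith
  then show ?case using p by simp
qed

lemma sAB_gt2: "sAB (Suc k) > 2"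
proof (induction k)
  case 0
  have "sqrt (5::real) > 0" by simp
  then show ?case by (simp add: sAB_def)
next
  case (Suc k) then show ?case using sAB_mono[of "Suc k"] by simp
qed

lemma angle_irrational:
  assumes c: "2 * cos a = 2 - sqrt 5"
  shows "a / (2 * pi) \<notin> \<rat>"
proof
  assume "a / (2 * pi) \<in> \<rat>"
  then obtain p q :: int where q: "q > 0" and pq: "a / (2 * pi) = of_int p / of_int q"
    by (rule Rats_cases')
  have "real_of_int q * a = 2 * pi * of_int p" using pq q by (simp add: field_simps)
  then have "cos (real_of_int q * a) = 1" by simp
  moreover have "real (nat q) = real_of_int q" using q by simp
  ultimately have "2 * cos (real (nat q) * a) = 2" by simp
  then have "real_of_int (fst (AB (nat q))) + real_of_int (snd (AB (nat q))) * sqrt 5 = 2"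
    using AB_cos[OF c] by simp
  then have "snd (AB (nat q)) = 0 \<and> fst (AB (nat q)) = 2" by (rule sqrt5_indep)
  then have "sAB (nat q) = 2" by (simp add: sAB_def)
  moreover obtain k where "nat q = Suc k" using q by (metis gr0_implies_Suc zero_less_nat_eq)
  ultimately show False using sAB_gt2[of k] by simp
qed


lemma conj_diag:
  fixes p1 p2 q1 q2 a b c d :: real
  assumes p: "p1^2 + p2^2 = 1" and q: "q1^2 + q2^2 = 1"
  shows "mat2 (Complex p1 p2) 0 0 (Complex q1 q2) ** qm a b c d ** mat2 (cnj (Complex p1 p2)) 0 0 (cnj (Complex q1 q2))
    = qm a b ((q1*p1 + q2*p2) * c - (q2*p1 - q1*p2) * d) ((q2*p1 - q1*p2) * c + (q1*p1 + q2*p2) * d)"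
  unfolding qm_def
  apply (simp add: mat2_eq_iff complex_eq_iff)
  using p q
  apply (intro conjI)
         apply ((simp add: algebra_simps; fail) | algebra)+
  done

lemma cis_Complex: "cis x = Complex (cos x) (sin x)"
  by (simp add: complex_eq_iff)

lemma g1_conj_rot:
  "g1 ** rot n1 n2 n3 t ** Dp = rot n1 (cos (4*pi/5) * n2 + sin (4*pi/5) * n3) (- sin (4*pi/5) * n2 + cos (4*pi/5) * n3) t"
proof -
  have w1: "cos (4*pi/5) * cos (8*pi/5) + sin (4*pi/5) * sin (8*pi/5) = cos (4*pi/5)"
  proof -
    have "cos (4*pi/5) * cos (8*pi/5) + sin (4*pi/5) * sin (8*pi/5) = cos (4*pi/5 - 8*pi/5)"
      by (rule cos_diff[symmetric])
    also have "4*pi/5 - 8*pi/5 = -(4*pi/(5::real))" by simp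
    finally show ?thesis by simp
  qed
  have w2: "sin (4*pi/5) * cos (8*pi/5) - cos (4*pi/5) * sin (8*pi/5) = - sin (4*pi/5)"
  proof -
    have "sin (4*pi/5) * cos (8*pi/5) - cos (4*pi/5) * sin (8*pi/5) = sin (4*pi/5 - 8*pi/5)"
      by (rule sin_diff[symmetric])
    also have "4*pi/5 - 8*pi/5 = -(4*pi/(5::real))" by simp
    finally show ?thesis by simp
  qed
  have "g1 ** rot n1 n2 n3 t ** Dp = mat2 (Complex (cos (8*pi/5)) (sin (8*pi/5))) 0 0 (Complex (cos (4*pi/5)) (sin (4*pi/5)))
     ** qm (cos t) (sin t * n1) (sin t * n2) (sin t * n3)
     ** mat2 (cnj (Complex (cos (8*pi/5)) (sin (8*pi/5)))) 0 0 (cnj (Complex (cos (4*pi/5)) (sin (4*pi/5))))"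
    unfolding g1_def Dp_def Pc_def Qc_def rot_def cis_Complex ..
  also have "\<dots> = qm (cos t) (sin t * n1)
      (cos (4*pi/5) * (sin t * n2) - (- sin (4*pi/5)) * (sin t * n3))
      ((- sin (4*pi/5)) * (sin t * n2) + cos (4*pi/5) * (sin t * n3))"
    unfolding conj_diag[OF sin_cos_squared_add2 sin_cos_squared_add2] w1 w2 ..
  also have "\<dots> = rot n1 (cos (4*pi/5) * n2 + sin (4*pi/5) * n3) (- sin (4*pi/5) * n2 + cos (4*pi/5) * n3) t"
    unfolding rot_def qm_eq_iff by (simp add: algebra_simps)
  finally show ?thesis .
qed

definition "SS = {mat c ** g | c g. cmod c = 1 \<and> g \<in> rho04_image}"

lemma SS_mult: "x \<in> SS \<Longrightarrow> y \<in> SS \<Longrightarrow> x ** y \<in> SS"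
proof -
  assume "x \<in> SS" "y \<in> SS"
  then obtain c g c' g' where x: "x = mat c ** g" "cmod c = 1" "g \<in> rho04_image"
    and y: "y = mat c' ** g'" "cmod c' = 1" "g' \<in> rho04_image"
    unfolding SS_def by blast
  have "x ** y = mat c ** ((g ** mat c') ** g')"
    unfolding x y by (simp add: matrix_mul_assoc)
  also have "\<dots> = mat c ** ((mat c' ** g) ** g')" by (simp only: mat_comm[of c' g, symmetric])
  also have "\<dots> = mat (c * c') ** (g ** g')" by (simp add: matrix_mul_assoc mat_mult_mat)
  finally have "x ** y = mat (c * c') ** (g ** g')" .
  moreover have "cmod (c * c') = 1" using x y by (simp add: norm_mult)
  moreover have "g ** g' \<in> rho04_image" using x(3) y(3) unfolding rho04_image_def by (rule gen_group_mult)
  ultimately show ?thesis unfolding SS_def by blast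
qed

lemma image_SS: "g \<in> rho04_image \<Longrightarrow> g \<in> SS"
  unfolding SS_def by (rule CollectI, rule exI[of _ 1], rule exI[of _ g]) simp

lemma scal_SS: "cmod c = 1 \<Longrightarrow> mat c \<in> SS"
proof -
  assume "cmod c = 1"
  moreover have "mat 1 \<in> rho04_image" unfolding rho04_image_def by (rule gen_one)
  ultimately show ?thesis unfolding SS_def by force
qed

lemma g1_in: "g1 \<in> rho04_image" and Dp_in: "Dp \<in> rho04_image"
proof -
  have a: "g1 \<in> rho04_generators" unfolding g1_eq[symmetric] by (simp add: rho04_generators_def)
  have "g1 ** mat 1 \<in> gen_group rho04_generators" by (rule gen_mul[OF a gen_one])
  then show "g1 \<in> rho04_image" unfolding rho04_image_def by simp
  have "matrix_inv g1 ** mat 1 \<in> gen_group rho04_generators" by (rule gen_inv[OF a gen_one])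
  moreover have "matrix_inv g1 = Dp" by (rule matrix_inv_eq[OF g1_Dp])
  ultimately show "Dp \<in> rho04_image" unfolding rho04_image_def by simp
qed


theorem lemma6p3:
  shows "dense_in_PU2 rho04_image"
proof -
  define K where "K = closure SS"
  have Kmult: "\<And>x y. x \<in> K \<Longrightarrow> y \<in> K \<Longrightarrow> x ** y \<in> K"
    unfolding K_def by (rule closure_mult[OF SS_mult])
  have Kclosed: "closed K" unfolding K_def by simp
  have GK: "\<And>g. g \<in> rho04_image \<Longrightarrow> g \<in> K"
    unfolding K_def using image_SS closure_subset by blast
  have scalK: "\<And>c. cmod c = 1 \<Longrightarrow> mat c \<in> K"
    unfolding K_def using scal_SS closure_subset by blast
  obtain y0 y1 y2 y3 where hq: "hh = qm y0 y1 y2 y3" and yn: "y0^2+y1^2+y2^2+y3^2 = 1"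
    using su2_qm[OF hh_unitary hh_det] by blast
  have "Complex y0 y1 = complex_of_real (fib_tau^2) + complex_of_real fib_tau * cis (4*pi/5)"
    using hh11 unfolding hq qm_def by simp
  then have y01: "y0 = fib_tau^2 + fib_tau * cos (4*pi/5)" "y1 = fib_tau * sin (4*pi/5)"
    by (simp_all add: complex_eq_iff)
  define r where "r = sqrt (5::real)"
  have r2: "r * r = 5" unfolding r_def by simp
  have rb: "2.2 < r" "r < 2.3" unfolding r_def using sqrt5_bounds by simp_all
  have tau_r: "fib_tau = (r - 1)/2" unfolding fib_tau_def r_def ..
  have C_r: "cos (4*pi/5) = -((1+r)/4)" unfolding r_def by (rule cos_4pi5)
  have y0r: "y0 = (2 - r)/2"
    unfolding y01 tau_r C_r using r2 by (simp add: field_simps power2_eq_square)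
  have y1sq: "y1^2 = (5 - 2*r)/4"
  proof -
    have "y1^2 = fib_tau^2 * (1 - (cos (4*pi/5))^2)"
      unfolding y01 by (simp add: power_mult_distrib sin_squared_eq)
    also have "\<dots> = (5 - 2*r)/4" unfolding tau_r C_r power2_minus using r2 by (simp add: field_simps power2_eq_square)
    finally show ?thesis .
  qed
  have s0sq: "1 - y0^2 = (4*r - 5)/4" unfolding y0r using r2 by (simp add: field_simps power2_eq_square)
  have s0pos: "1 - y0^2 > 0" unfolding s0sq using rb by simp
  have y0b: "-1 \<le> y0" "y0 \<le> 1" unfolding y0r using rb by simp_all
  define a0 where "a0 = arccos y0"
  define s0 where "s0 = sqrt (1 - y0^2)"
  have s0p: "s0 > 0" unfolding s0_def using s0pos by simp
  have s02: "s0^2 = 1 - y0^2" unfolding s0_def using s0pos by simp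
  have ca: "cos a0 = y0" unfolding a0_def using y0b by simp
  have sa: "sin a0 = s0" unfolding a0_def s0_def using y0b by (simp add: sin_arccos)
  define n1 where "n1 = y1 / s0"
  define n2 where "n2 = y2 / s0"
  define n3 where "n3 = y3 / s0"
  have nunit: "n1^2 + n2^2 + n3^2 = 1"
  proof -
    have "n1^2 + n2^2 + n3^2 = (y1^2 + y2^2 + y3^2) / s0^2"
      unfolding n1_def n2_def n3_def by (simp add: power_divide add_divide_distrib)
    also have "y1^2 + y2^2 + y3^2 = s0^2" using yn s02 by simp
    finally show ?thesis using s0p by simp
  qed
  have hrot: "hh = rot n1 n2 n3 a0"
    unfolding hq rot_def ca sa n1_def n2_def n3_def using s0p by simp
  have irr: "a0 / (2 * pi) \<notin> \<rat>"
    by (rule angle_irrational) (simp add: ca y0r r_def)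
  have pw: "rot n1 n2 n3 (real k * a0) \<in> rho04_image" for k :: nat
  proof (induction k)
    case 0
    show ?case unfolding rho04_image_def by (simp add: rot_zero gen_one)
  next
    case (Suc k)
    have "rot n1 n2 n3 (real (Suc k) * a0) = rot n1 n2 n3 a0 ** rot n1 n2 n3 (real k * a0)"
      unfolding rot_add[OF nunit] by (simp add: algebra_simps)
    then show ?case using Suc hh_in hrot unfolding rho04_image_def by (simp add: gen_group_mult)
  qed
  have T1: "rot n1 n2 n3 t \<in> K" for t
    by (rule torus_in_closed[OF Kclosed GK[OF pw] irr])
  define C where "C = cos (4*pi/5)"
  define Sn where "Sn = sin (4*pi/5)"
  define m1 where "m1 = n1"
  define m2 where "m2 = C * n2 + Sn * n3"
  define m3 where "m3 = - Sn * n2 + C * n3"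
  have T2: "rot m1 m2 m3 t \<in> K" for t
  proof -
    have "rot m1 m2 m3 t = g1 ** rot n1 n2 n3 t ** Dp"
      unfolding g1_conj_rot m1_def m2_def m3_def C_def Sn_def ..
    then show ?thesis using Kmult[OF Kmult[OF GK[OF g1_in] T1] GK[OF Dp_in]] by simp
  qed
  have CS: "C^2 + Sn^2 = 1" unfolding C_def Sn_def by simp
  have munit: "m1^2 + m2^2 + m3^2 = 1"
  proof -
    have "m1^2 + m2^2 + m3^2 = n1^2 + (C^2 + Sn^2) * (n2^2 + n3^2)"
      unfolding m1_def m2_def m3_def by algebra
    then show ?thesis using CS nunit by simp
  qed
  define d where "d = n1*m1 + n2*m2 + n3*m3"
  have d1: "d = n1^2 + C * (1 - n1^2)"
  proof -
    have "d = n1^2 + C * (n2^2 + n3^2)" unfolding d_def m1_def m2_def m3_def by algebra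
    moreover have "n2^2 + n3^2 = 1 - n1^2" using nunit by simp
    ultimately show ?thesis by simp
  qed
  have N: "n1^2 * (4*r - 5) = 5 - 2*r"
  proof -
    have "n1^2 = y1^2 / s0^2" unfolding n1_def by (simp add: power_divide)
    also have "\<dots> = ((5 - 2*r)/4) / ((4*r - 5)/4)" unfolding y1sq s02 s0sq ..
    finally show ?thesis using rb by (simp add: field_simps)
  qed
  have Cr: "C = -((1+r)/4)" unfolding C_def by (rule C_r)
  have "d * (4*r - 5) = n1^2 * (4*r - 5) + C * ((4*r - 5) - n1^2 * (4*r - 5))"
    unfolding d1 by (simp add: algebra_simps)
  also have "\<dots> = (5 - 2*r) + C * ((4*r - 5) - (5 - 2*r))" unfolding N ..
  also have "\<dots> = -r" unfolding Cr using r2 by (simp add: field_simps)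
  finally have dr: "d * (4*r - 5) = -r" .
  have X: "(4*r - 5)^2 \<ge> 10"
  proof -
    have "4*r - 5 \<ge> 3.8" using rb by simp
    then have "(4*r-5)*(4*r-5) \<ge> 3.8 * 3.8" using rb by (intro mult_mono) simp_all
    then show ?thesis by (simp add: power2_eq_square)
  qed
  have d2X: "d^2 * (4*r - 5)^2 = 5"
  proof -
    have "d^2 * (4*r - 5)^2 = (d * (4*r - 5))^2" by (simp add: power_mult_distrib)
    also have "\<dots> = 5" unfolding dr using r2 by (simp add: power2_eq_square)
    finally show ?thesis .
  qed
  have dd: "(n1*m1 + n2*m2 + n3*m3)^2 \<le> 1/2"
  proof (rule ccontr)
    assume "\<not> (n1*m1 + n2*m2 + n3*m3)^2 \<le> 1/2"
    then have "d^2 > 1/2" unfolding d_def by simp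
    then have "d^2 * (4*r - 5)^2 > 1/2 * (4*r - 5)^2"
      using X rb by (intro mult_strict_right_mono) simp_all
    then show False using d2X X by simp
  qed
  have su: "qm x0 x1 x2 x3 \<in> K" if "x0^2+x1^2+x2^2+x3^2 = 1" for x0 x1 x2 x3
    by (rule stage2[OF Kmult nunit munit dd T1 T2 that])
  have "unitary2 \<subseteq> K"
    by (rule unitary_in_K[OF Kmult scalK su])
  then show ?thesis
    unfolding dense_in_PU2_def K_def SS_def using image_unitary by blast
qed

end
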